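(* Let $G$ be a graph and $\mathscr{C}$ a skew graph category such that $(G,\emptyset,\emptyset)\in\mathscr{C}$. Then for all $k,l\in\mathbb{N}_0$ the vector space $\mathscr{C}^G(k,l)$ has the linear basis $\{\hat T^{\mathbf{a}\mathbf{b}}_G\mid[\mathbf{a},\mathbf{b}]\in W^{\mathscr{C}}_G(k,l)\}$.
   Context: Graphs are finite, undirected, without multiple edges, loops allowed, up to isomorphism; $N_k$ is the edgeless graph on $k$ vertices; graph homomorphisms map edges (including loops) to edges. A vertex overlap of graphs $K,H$ is a subset $f\subset V(K)\times V(H)$ in which each vertex occurs at most once; $K\cup_fH$ is the quotient of $K\sqcup H$ identifying $v$ with $w$ for $(v,w)\in f$ (edges between vertices of the quotient iff between some representatives), with induced maps $f_K,f_H$. Bilabelled graph: $(K,\mathbf{a},\mathbf{b})$, $\mathbf{a}\in V(K)^k$, $\mathbf{b}\in V(K)^l$, up to isomorphism preserving tuples; $\mathscr{C}(k,l)$ those in $\mathscr{C}$ with $k$ inputs, $l$ outputs. Operations: $f$-union $(K,\mathbf{a},\mathbf{b})\cup_f(H,\mathbf{c},\mathbf{d})=(K\cup_fH,f_K(\mathbf{a})f_H(\mathbf{c}),f_K(\mathbf{b})f_H(\mathbf{d}))$; composition (for $|\mathbf{b}|=|\mathbf{c}|$) $(H,\mathbf{c},\mathbf{d})\cdot(K,\mathbf{a},\mathbf{b})=(H\cdot K,\mathbf{a},\mathbf{d})$ with $H\cdot K$ the quotient of $K\sqcup H$ identifying $b_i$ with $c_i$; involution swaps the tuples. $\ker\mathbf{b}$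 is the partition of positions by equal entries. A skew graph category is a set of bilabelled graphs containing $(N_0,\emptyset,\emptyset)$, $(M,(v),(v))$, $(M,\emptyset,(v,v))$ ($M$ the one-vertex loopless graph with vertex $v$), closed under all $f$-unions, under compositions $\mathbf{H}\cdot\mathbf{K}$ with $\mathbf{K}=(K,\mathbf{a},\mathbf{b}),\mathbf{H}=(H,\mathbf{c},\mathbf{d})$, $\ker\mathbf{b}=\ker\mathbf{c}$, and under involution. With the vertices of $G$ labelled $1,\dots,n$, for a bilabelled graph $\mathbf{K}=(K,\mathbf{a},\mathbf{b})$ the map $\hat T^G_{\mathbf{K}}\colon(\mathbb{C}^n)^{\otimes k}\to(\mathbb{C}^n)^{\otimes l}$ has entries $[\hat T^G_{\mathbf{K}}]_{\mathbf{j}\mathbf{i}}=\#\{\phi\colon K\to G\text{ injective homomorphism}\mid\phi(\mathbf{a})=\mathbf{i},\phi(\mathbf{b})=\mathbf{j}\}$, and $\mathscr{C}^G(k,l):=\mathrm{span}\{\hat T^G_{\mathbf{K}}\mid\mathbf{K}\in\mathscr{C}(k,l)\}$. $W_G(k,l):=(V(G)^k\times V(G)^l)/\mathrm{Aut}\,G$ (diagonal action), with classes $[\mathbf{a},\mathbf{b}]$; $\hat T^{\mathbf{a}\mathbf{b}}_G:=\hat T^G_{(G,\mathbf{a},\mathbf{b})}$, which depends only on $[\mathbf{a},\mathbf{b}]$; and $W^{\mathscr{C}}_G(k,l):=\{[\mathbf{a},\mathbf{b}]\in W_G(k,l)\mid(G,\mathbf{a},\mathbf{b})\in\mathscr{C}(k,l)\}$.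 *)

theory Defs
  imports Complex_Main "HOL-Library.FuncSet" "HOL-Library.Function_Algebras"
begin

record graph =
  verts :: "nat set"
  adj   :: "nat \<Rightarrow> nat \<Rightarrow> bool"

definition wf_graph :: "graph \<Rightarrow> bool" where
  "wf_graph K \<longleftrightarrow> finite (verts K)
     \<and> (\<forall>u v. adj K u v \<longrightarrow> u \<in> verts K \<and> v \<in> verts K)
     \<and> (\<forall>u v. adj K u v \<longrightarrow> adj K v u)"

text \<open>Bilabelled graph (K, inputs a, outputs b).\<close>
type_synonym bgraph = "graph \<times> nat list \<times> nat list"

definition wf_bgraph :: "bgraph \<Rightarrow> bool" where
  "wf_bgraph X \<longleftrightarrow> (case X of (K, a, b) \<Rightarrow>
     wf_graph K \<and> set a \<subseteq> verts K \<and> set b \<subseteq> verts K)"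

definition bgraph_iso :: "bgraph \<Rightarrow> bgraph \<Rightarrow> bool" where
  "bgraph_iso X Y \<longleftrightarrow> (case X of (K, a, b) \<Rightarrow> case Y of (K', a', b') \<Rightarrow>
     (\<exists>\<sigma>. bij_betw \<sigma> (verts K) (verts K')
        \<and> (\<forall>u\<in>verts K. \<forall>v\<in>verts K. adj K' (\<sigma> u) (\<sigma> v) \<longleftrightarrow> adj K u v)
        \<and> map \<sigma> a = a' \<and> map \<sigma> b = b'))"

definition vertex_overlap :: "graph \<Rightarrow> graph \<Rightarrow> (nat \<times> nat) set \<Rightarrow> bool" where
  "vertex_overlap K H f \<longleftrightarrow> f \<subseteq> verts K \<times> verts H
     \<and> (\<forall>v w w'. (v, w) \<in> f \<longrightarrow> (v, w') \<in> f \<longrightarrow> w = w')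
     \<and> (\<forall>v v' w. (v, w) \<in> f \<longrightarrow> (v', w) \<in> f \<longrightarrow> v = v')"

text \<open>X (with the induced maps gK, gH) is (a copy of) the quotient K \<union>_f H of the disjoint
  union of K and H identifying v with w for (v,w) in f; edges between quotient vertices
  iff between some representatives.\<close>
definition is_glue ::
  "graph \<Rightarrow> graph \<Rightarrow> (nat \<times> nat) set \<Rightarrow> graph \<Rightarrow> (nat \<Rightarrow> nat) \<Rightarrow> (nat \<Rightarrow> nat) \<Rightarrow> bool" where
  "is_glue K H f X gK gH \<longleftrightarrow> wf_graph X
     \<and> verts X = gK ` verts K \<union> gH ` verts H
     \<and> inj_on gK (verts K) \<and> inj_on gH (verts H)
     \<and> (\<forall>v\<in>verts K. \<forall>w\<in>verts H. gK v = gH w \<longleftrightarrow> (v, w) \<in> f)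
     \<and> (\<forall>x y. adj X x y \<longleftrightarrow>
          (\<exists>u\<in>verts K. \<exists>v\<in>verts K. adj K u v \<and> gK u = x \<and> gK v = y)
        \<or> (\<exists>u\<in>verts H. \<exists>v\<in>verts H. adj H u v \<and> gH u = x \<and> gH v = y))"

definition ker_eq :: "nat list \<Rightarrow> nat list \<Rightarrow> bool" where
  "ker_eq b c \<longleftrightarrow> length b = length c
     \<and> (\<forall>i<length b. \<forall>j<length b. b ! i = b ! j \<longleftrightarrow> c ! i = c ! j)"

definition N0 :: graph where "N0 = \<lparr>verts = {}, adj = (\<lambda>_ _. False)\<rparr>"
definition M1 :: graph where "M1 = \<lparr>verts = {0}, adj = (\<lambda>_ _. False)\<rparr>"

text \<open>Skew graph category. Bilabelled graphs are taken up to isomorphism, so a class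
  is represented by an isomorphism-closed set of concrete well-formed bilabelled graphs.\<close>
definition skew_graph_category :: "bgraph set \<Rightarrow> bool" where
  "skew_graph_category C \<longleftrightarrow>
     (\<forall>X\<in>C. wf_bgraph X)
   \<and> (\<forall>X Y. X \<in> C \<longrightarrow> wf_bgraph Y \<longrightarrow> bgraph_iso X Y \<longrightarrow> Y \<in> C)
   \<and> (N0, [], []) \<in> C \<and> (M1, [0], [0]) \<in> C \<and> (M1, [], [0, 0]) \<in> C
   \<and> (\<forall>K a b H c d f X gK gH. (K, a, b) \<in> C \<longrightarrow> (H, c, d) \<in> C
        \<longrightarrow> vertex_overlap K H f \<longrightarrow> is_glue K H f X gK gH
        \<longrightarrow> (X, map gK a @ map gH c, map gK b @ map gH d) \<in> C)
   \<and> (\<forall>K a b H c d X gK gH. (K, a, b) \<in> C \<longrightarrow> (H, c, d) \<in> C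
        \<longrightarrow> ker_eq b c \<longrightarrow> is_glue K H (set (zip b c)) X gK gH
        \<longrightarrow> (X, map gK a, map gH d) \<in> C)
   \<and> (\<forall>K a b. (K, a, b) \<in> C \<longrightarrow> (K, b, a) \<in> C)"

text \<open>Vertices of G index the coordinates directly; a map
  (C^n)^{\<otimes>k} \<rightarrow> (C^n)^{\<otimes>l} is its matrix, a function of (j, i).\<close>
definition T_hat :: "graph \<Rightarrow> bgraph \<Rightarrow> nat list \<times> nat list \<Rightarrow> complex" where
  "T_hat G X = (case X of (K, a, b) \<Rightarrow> (\<lambda>(j, i). of_nat (card
     {\<phi> \<in> verts K \<rightarrow>\<^sub>E verts G. inj_on \<phi> (verts K)
        \<and> (\<forall>u\<in>verts K. \<forall>v\<in>verts K. adj K u v \<longrightarrow> adj G (\<phi> u) (\<phi> v))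
        \<and> map \<phi> a = i \<and> map \<phi> b = j})))"

definition cscale :: "complex \<Rightarrow> ('x \<Rightarrow> complex) \<Rightarrow> ('x \<Rightarrow> complex)" where
  "cscale c f = (\<lambda>x. c * f x)"

definition cspan :: "('x \<Rightarrow> complex) set \<Rightarrow> ('x \<Rightarrow> complex) set" where
  "cspan S = module.span cscale S"

definition cindependent :: "('x \<Rightarrow> complex) set \<Rightarrow> bool" where
  "cindependent S \<longleftrightarrow> \<not> module.dependent cscale S"

definition CG :: "graph \<Rightarrow> bgraph set \<Rightarrow> nat \<Rightarrow> nat \<Rightarrow> (nat list \<times> nat list \<Rightarrow> complex) set" where
  "CG G C k l = cspan {T_hat G (K, a, b) | K a b. (K, a, b) \<in> C \<and> length a = k \<and> length b = l}"

definition Aut :: "graph \<Rightarrow> (nat \<Rightarrow> nat) set" where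
  "Aut G = {\<sigma>. bij_betw \<sigma> (verts G) (verts G)
     \<and> (\<forall>u\<in>verts G. \<forall>v\<in>verts G. adj G (\<sigma> u) (\<sigma> v) \<longleftrightarrow> adj G u v)}"

text \<open>Representatives (a,b) of classes [a,b] in W^C_G(k,l).\<close>
definition WC_reps :: "graph \<Rightarrow> bgraph set \<Rightarrow> nat \<Rightarrow> nat \<Rightarrow> (nat list \<times> nat list) set" where
  "WC_reps G C k l = {(a, b). length a = k \<and> length b = l
     \<and> set a \<subseteq> verts G \<and> set b \<subseteq> verts G \<and> (G, a, b) \<in> C}"

end

theory Submission
  imports Defs
begin

definition homs :: "graph \<Rightarrow> graph \<Rightarrow> (nat \<Rightarrow> nat) set" where
  "homs K G = {\<phi> \<in> verts K \<rightarrow>\<^sub>E verts G. inj_on \<phi> (verts K)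
        \<and> (\<forall>u\<in>verts K. \<forall>v\<in>verts K. adj K u v \<longrightarrow> adj G (\<phi> u) (\<phi> v))}"

lemma T_hat_eq:
  "T_hat G (K, a, b) (j, i) = of_nat (card {\<phi> \<in> homs K G. map \<phi> a = i \<and> map \<phi> b = j})"
  unfolding T_hat_def homs_def by (simp add: conj_assoc)

lemma fun_sum_apply: "finite S \<Longrightarrow> (\<Sum>x\<in>S. f x) y = (\<Sum>x\<in>S. f x y)"
  by (induction S rule: finite_induct) (auto simp: plus_fun_def zero_fun_def)

lemma card_bij_pred:
  assumes "finite S" "inj_on h S" "h ` S \<subseteq> S"
  shows "card {x\<in>S. P (h x)} = card {x\<in>S. P x}"
proof -
  have hS: "h ` S = S" using endo_inj_surj assms by blast
  have "{x\<in>S. P x} = h ` {x\<in>S. P (h x)}" using hS by auto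
  moreover have "inj_on h {x\<in>S. P (h x)}" using assms(2) by (rule inj_on_subset) auto
  ultimately show ?thesis by (simp add: card_image)
qed

lemma homs_finite: "wf_graph G \<Longrightarrow> finite (verts K) \<Longrightarrow> finite (homs K G)"
  unfolding homs_def wf_graph_def by (rule finite_subset[of _ "verts K \<rightarrow>\<^sub>E verts G"]) (auto intro: finite_PiE)

lemma homsD: "\<phi> \<in> homs K G \<Longrightarrow> x \<in> verts K \<Longrightarrow> \<phi> x \<in> verts G"
  unfolding homs_def by auto

lemma id_homs: "restrict id (verts G) \<in> homs G G"
  unfolding homs_def by (auto simp: inj_on_def)

lemma comp_homs:
  assumes "\<phi> \<in> homs K G" "\<psi> \<in> homs G G"
  shows "restrict (\<psi> \<circ> \<phi>) (verts K) \<in> homs K G"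
proof -
  have m: "\<phi> ` verts K \<subseteq> verts G" using assms(1) homsD by blast
  have "inj_on (\<psi> \<circ> \<phi>) (verts K)"
    using assms m unfolding homs_def by (auto intro!: comp_inj_on inj_on_subset[of \<psi> "verts G"])
  moreover have "\<forall>u\<in>verts K. \<forall>v\<in>verts K. adj K u v \<longrightarrow> adj G (\<psi> (\<phi> u)) (\<psi> (\<phi> v))"
    using assms m unfolding homs_def by blast
  ultimately show ?thesis using assms m unfolding homs_def by (auto simp: inj_on_def)
qed

lemma L_inj:
  assumes "\<psi> \<in> homs G G"
  shows "inj_on (\<lambda>\<phi>. restrict (\<psi> \<circ> \<phi>) (verts K)) (homs K G)"
proof (rule inj_onI)
  fix \<phi> \<phi>' assume p: "\<phi> \<in> homs K G" "\<phi>' \<in> homs K G"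
    and e: "restrict (\<psi> \<circ> \<phi>) (verts K) = restrict (\<psi> \<circ> \<phi>') (verts K)"
  show "\<phi> = \<phi>'"
  proof (rule extensionalityI)
    show "\<phi> \<in> extensional (verts K)" "\<phi>' \<in> extensional (verts K)"
      using p unfolding homs_def by (auto simp: PiE_def)
  next
    fix x assume x: "x \<in> verts K"
    have "\<psi> (\<phi> x) = \<psi> (\<phi>' x)" using fun_cong[OF e, of x] x by simp
    moreover have "inj_on \<psi> (verts G)" using assms unfolding homs_def by auto
    ultimately show "\<phi> x = \<phi>' x" using homsD[OF p(1) x] homsD[OF p(2) x] by (auto dest: inj_onD)
  qed
qed

lemma hom_surj:
  assumes "wf_graph G" "\<psi> \<in> homs G G"
  shows "\<psi> ` verts G = verts G"
  using assms unfolding homs_def wf_graph_def by (intro endo_inj_surj) auto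

lemma R_inj:
  assumes "wf_graph G" "\<psi> \<in> homs G G"
  shows "inj_on (\<lambda>\<phi>. restrict (\<phi> \<circ> \<psi>) (verts G)) (homs G G)"
proof (rule inj_onI)
  fix \<phi> \<phi>' assume p: "\<phi> \<in> homs G G" "\<phi>' \<in> homs G G"
    and e: "restrict (\<phi> \<circ> \<psi>) (verts G) = restrict (\<phi>' \<circ> \<psi>) (verts G)"
  show "\<phi> = \<phi>'"
  proof (rule extensionalityI)
    show "\<phi> \<in> extensional (verts G)" "\<phi>' \<in> extensional (verts G)"
      using p unfolding homs_def by (auto simp: PiE_def)
  next
    fix y assume y: "y \<in> verts G"
    then obtain x where x: "x \<in> verts G" "y = \<psi> x" using hom_surj[OF assms] by blast
    show "\<phi> y = \<phi>' y" using fun_cong[OF e, of x] x by simp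
  qed
qed

lemma orbit_T:
  assumes G: "wf_graph G" and psi: "\<psi> \<in> homs G G" and "set a \<subseteq> verts G" "set b \<subseteq> verts G"
  shows "T_hat G (G, map \<psi> a, map \<psi> b) = T_hat G (G, a, b)"
proof (rule ext, clarify)
  fix j i
  let ?h = "\<lambda>\<phi>. restrict (\<phi> \<circ> \<psi>) (verts G)"
  have mm: "\<And>\<phi> xs. set xs \<subseteq> verts G \<Longrightarrow> map \<phi> (map \<psi> xs) = map (?h \<phi>) xs"
    by (auto intro!: map_cong)
  have "{\<phi> \<in> homs G G. map \<phi> (map \<psi> a) = i \<and> map \<phi> (map \<psi> b) = j}
      = {\<phi> \<in> homs G G. map (?h \<phi>) a = i \<and> map (?h \<phi>) b = j}"
    by (simp only: mm[OF assms(3)] mm[OF assms(4)])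
  moreover have "card {\<phi> \<in> homs G G. map (?h \<phi>) a = i \<and> map (?h \<phi>) b = j}
      = card {\<phi> \<in> homs G G. map \<phi> a = i \<and> map \<phi> b = j}"
    by (rule card_bij_pred[where P = "\<lambda>\<chi>. map \<chi> a = i \<and> map \<chi> b = j"])
       (use G psi homs_finite[OF G] R_inj[OF G psi] comp_homs[OF psi] in \<open>auto simp: wf_graph_def\<close>)
  ultimately show "T_hat G (G, map \<psi> a, map \<psi> b) (j, i) = T_hat G (G, a, b) (j, i)"
    by (simp add: T_hat_eq)
qed

lemma T_self_nonzero:
  assumes "wf_graph G" "set a \<subseteq> verts G" "set b \<subseteq> verts G"
  shows "T_hat G (G, a, b) (b, a) \<noteq> 0"
proof -
  have "restrict id (verts G) \<in> {\<phi> \<in> homs G G. map \<phi> a = a \<and> map \<phi> b = b}"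
    using id_homs assms by (auto intro!: map_idI)
  moreover have "finite {\<phi> \<in> homs G G. map \<phi> a = a \<and> map \<phi> b = b}"
    using homs_finite[OF assms(1)] assms(1) by (auto simp: wf_graph_def)
  ultimately show ?thesis by (auto simp: T_hat_eq)
qed

lemma card_as_sum: "finite S \<Longrightarrow> card {x\<in>S. P x} = (\<Sum>x\<in>S. if P x then 1 else (0::nat))"
  by (simp add: sum.inter_filter[symmetric])

lemma count_swap:
  assumes G: "wf_graph G" and K: "finite (verts K)" and ab: "set a \<subseteq> verts K" "set b \<subseteq> verts K"
  shows "(\<Sum>\<phi>\<in>homs K G. card {\<psi>\<in>homs G G. map \<psi> (map \<phi> a) = i \<and> map \<psi> (map \<phi> b) = j})
    = card (homs G G) * card {\<phi>\<in>homs K G. map \<phi> a = i \<and> map \<phi> b = j}"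
proof -
  let ?A = "homs G G" and ?H = "homs K G"
  let ?Q = "\<lambda>\<psi> \<phi>. map \<psi> (map \<phi> a) = i \<and> map \<psi> (map \<phi> b) = j"
  have fA: "finite ?A" using homs_finite G by (auto simp: wf_graph_def)
  have fH: "finite ?H" using homs_finite G K by auto
  have "(\<Sum>\<phi>\<in>?H. card {\<psi>\<in>?A. ?Q \<psi> \<phi>}) = (\<Sum>\<phi>\<in>?H. \<Sum>\<psi>\<in>?A. if ?Q \<psi> \<phi> then 1 else 0)"
    using fA by (simp add: card_as_sum)
  also have "\<dots> = (\<Sum>\<psi>\<in>?A. \<Sum>\<phi>\<in>?H. if ?Q \<psi> \<phi> then 1 else 0)"
    by (rule sum.swap)
  also have "\<dots> = (\<Sum>\<psi>\<in>?A. card {\<phi>\<in>?H. ?Q \<psi> \<phi>})"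
    using fH by (simp add: card_as_sum)
  also have "\<dots> = (\<Sum>\<psi>\<in>?A. card {\<phi>\<in>?H. map \<phi> a = i \<and> map \<phi> b = j})"
  proof (rule sum.cong[OF refl])
    fix \<psi> assume psi: "\<psi> \<in> ?A"
    let ?h = "\<lambda>\<phi>. restrict (\<psi> \<circ> \<phi>) (verts K)"
    have mm: "\<And>\<phi> xs. set xs \<subseteq> verts K \<Longrightarrow> map \<psi> (map \<phi> xs) = map (?h \<phi>) xs"
      by (auto intro!: map_cong)
    have "{\<phi>\<in>?H. ?Q \<psi> \<phi>} = {\<phi>\<in>?H. map (?h \<phi>) a = i \<and> map (?h \<phi>) b = j}"
      by (simp only: mm[OF ab(1)] mm[OF ab(2)])
    also have "card \<dots> = card {\<phi>\<in>?H. map \<phi> a = i \<and> map \<phi> b = j}"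
      by (rule card_bij_pred[where P = "\<lambda>\<chi>. map \<chi> a = i \<and> map \<chi> b = j"])
         (use fH L_inj[OF psi] comp_homs[OF _ psi] in auto)
    finally show "card {\<phi>\<in>?H. ?Q \<psi> \<phi>} = card {\<phi>\<in>?H. map \<phi> a = i \<and> map \<phi> b = j}" .
  qed
  also have "\<dots> = card ?A * card {\<phi>\<in>?H. map \<phi> a = i \<and> map \<phi> b = j}" by simp
  finally show ?thesis .
qed

lemma T_decomp:
  assumes G: "wf_graph G" and K: "finite (verts K)" and ab: "set a \<subseteq> verts K" "set b \<subseteq> verts K"
  shows "T_hat G (K, a, b) = (\<Sum>\<phi>\<in>homs K G. cscale (1 / of_nat (card (homs G G))) (T_hat G (G, map \<phi> a, map \<phi> b)))"
proof (rule ext, clarify)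
  fix j i
  have fA: "finite (homs G G)" using homs_finite G by (auto simp: wf_graph_def)
  have N: "card (homs G G) \<noteq> 0" using fA id_homs by (metis card_0_eq empty_iff)
  have fH: "finite (homs K G)" using homs_finite G K by auto
  have "(\<Sum>\<phi>\<in>homs K G. cscale (1 / of_nat (card (homs G G))) (T_hat G (G, map \<phi> a, map \<phi> b))) (j, i)
     = (\<Sum>\<phi>\<in>homs K G. (1 / of_nat (card (homs G G))) * T_hat G (G, map \<phi> a, map \<phi> b) (j, i))"
    using fH by (simp add: fun_sum_apply cscale_def)
  also have "\<dots> = (1 / of_nat (card (homs G G))) * of_nat (\<Sum>\<phi>\<in>homs K G. card {\<psi>\<in>homs G G. map \<psi> (map \<phi> a) = i \<and> map \<psi> (map \<phi> b) = j})"
    by (simp only: T_hat_eq of_nat_sum sum_distrib_left)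
  also have "\<dots> = T_hat G (K, a, b) (j, i)"
    unfolding count_swap[OF G K ab] T_hat_eq using N by simp
  finally show "T_hat G (K, a, b) (j, i) = (\<Sum>\<phi>\<in>homs K G. cscale (1 / of_nat (card (homs G G))) (T_hat G (G, map \<phi> a, map \<phi> b))) (j, i)"
    by simp
qed

lemma glue_in_C:
  assumes C: "skew_graph_category C" and KC: "(K, a, b) \<in> C" and GC: "(G, [], []) \<in> C"
    and G: "wf_graph G" and phi: "\<phi> \<in> homs K G"
  shows "(G, map \<phi> a, map \<phi> b) \<in> C"
proof -
  let ?f = "(\<lambda>v. (v, \<phi> v)) ` verts K"
  have inj: "inj_on \<phi> (verts K)" using phi unfolding homs_def by auto
  have hom: "\<forall>u\<in>verts K. \<forall>v\<in>verts K. adj K u v \<longrightarrow> adj G (\<phi> u) (\<phi> v)"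
    using phi unfolding homs_def by auto
  have m: "\<phi> ` verts K \<subseteq> verts G" using phi homsD by blast
  have ov: "vertex_overlap K G ?f"
    unfolding vertex_overlap_def using m inj by (auto dest: inj_onD)
  have gl: "is_glue K G ?f G \<phi> id"
    unfolding is_glue_def
  proof (intro conjI allI)
    show "wf_graph G" by (rule G)
    show "verts G = \<phi> ` verts K \<union> id ` verts G" using m by auto
    show "inj_on \<phi> (verts K)" by (rule inj)
    show "inj_on id (verts G)" by simp
    show "\<forall>v\<in>verts K. \<forall>w\<in>verts G. (\<phi> v = id w) = ((v, w) \<in> ?f)" by auto
    fix x y
    show "adj G x y = ((\<exists>u\<in>verts K. \<exists>v\<in>verts K. adj K u v \<and> \<phi> u = x \<and> \<phi> v = y)
        \<or> (\<exists>u\<in>verts G. \<exists>v\<in>verts G. adj G u v \<and> id u = x \<and> id v = y))"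
      using G hom unfolding wf_graph_def by auto
  qed
  have "\<forall>K a b H c d f X gK gH. (K, a, b) \<in> C \<longrightarrow> (H, c, d) \<in> C
        \<longrightarrow> vertex_overlap K H f \<longrightarrow> is_glue K H f X gK gH
        \<longrightarrow> (X, map gK a @ map gH c, map gK b @ map gH d) \<in> C"
    using C unfolding skew_graph_category_def by (elim conjE) assumption
  from this[rule_format, OF KC GC ov gl] show ?thesis by simp
qed

lemma homs_Aut:
  assumes G: "wf_graph G" and phi: "\<phi> \<in> homs G G"
  shows "\<phi> \<in> Aut G"
proof -
  have inj: "inj_on \<phi> (verts G)" using phi unfolding homs_def by auto
  have hom: "\<forall>u\<in>verts G. \<forall>v\<in>verts G. adj G u v \<longrightarrow> adj G (\<phi> u) (\<phi> v)"
    using phi unfolding homs_def by auto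
  have bij: "bij_betw \<phi> (verts G) (verts G)" using hom_surj[OF G phi] inj by (simp add: bij_betw_def)
  let ?E = "{(u, v). adj G u v}"
  let ?h = "\<lambda>(u, v). (\<phi> u, \<phi> v)"
  have EV: "?E \<subseteq> verts G \<times> verts G" using G unfolding wf_graph_def by auto
  have fE: "finite ?E" using EV G unfolding wf_graph_def by (auto intro: finite_subset)
  have hE: "?h ` ?E \<subseteq> ?E" using hom EV by auto
  have ihE: "inj_on ?h ?E" using EV inj by (auto simp: inj_on_def)
  have eq: "?h ` ?E = ?E" by (rule endo_inj_surj[OF fE hE ihE])
  have "adj G (\<phi> u) (\<phi> v) \<longleftrightarrow> adj G u v" if uv: "u \<in> verts G" "v \<in> verts G" for u v
  proof
    assume "adj G (\<phi> u) (\<phi> v)"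
    then have "(\<phi> u, \<phi> v) \<in> ?h ` ?E" using eq by simp
    then obtain u' v' where e: "adj G u' v'" "\<phi> u' = \<phi> u" "\<phi> v' = \<phi> v" by auto
    then have "u' \<in> verts G" "v' \<in> verts G" using EV by auto
    then have "u' = u" "v' = v" using e uv inj by (auto dest: inj_onD)
    then show "adj G u v" using e by simp
  next
    assume "adj G u v" then show "adj G (\<phi> u) (\<phi> v)" using hom uv by auto
  qed
  then show ?thesis using bij unfolding Aut_def by auto
qed

lemma T_nonzero_D:
  assumes "T_hat G (K, a, b) (j, i) \<noteq> 0"
  shows "\<exists>\<phi>\<in>homs K G. map \<phi> a = i \<and> map \<phi> b = j"
proof -
  have "card {\<phi> \<in> homs K G. map \<phi> a = i \<and> map \<phi> b = j} \<noteq> 0"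
    using assms by (simp add: T_hat_eq)
  then have "{\<phi> \<in> homs K G. map \<phi> a = i \<and> map \<phi> b = j} \<noteq> {}" by (metis card.empty)
  then show ?thesis by blast
qed

lemma module_cscale: "module (cscale :: complex \<Rightarrow> ('x \<Rightarrow> complex) \<Rightarrow> _)"
  by unfold_locales (auto simp: cscale_def algebra_simps fun_eq_iff)

theorem proposition4p13:
  fixes G :: graph and C :: "bgraph set" and k l :: nat
  assumes "wf_graph G"
    and "skew_graph_category C"
    and "(G, [], []) \<in> C"
  shows "cindependent ((\<lambda>(a, b). T_hat G (G, a, b)) ` WC_reps G C k l)
    \<and> cspan ((\<lambda>(a, b). T_hat G (G, a, b)) ` WC_reps G C k l) = CG G C k l
    \<and> (\<forall>(a, b)\<in>WC_reps G C k l. \<forall>(a', b')\<in>WC_reps G C k l.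
          T_hat G (G, a, b) = T_hat G (G, a', b')
          \<longrightarrow> (\<exists>\<sigma>\<in>Aut G. map \<sigma> a = a' \<and> map \<sigma> b = b'))"
proof -
  note G = assms(1) and C = assms(2) and GC = assms(3)
  interpret m: module "cscale :: complex \<Rightarrow> (nat list \<times> nat list \<Rightarrow> complex) \<Rightarrow> _"
    by (rule module_cscale)
  let ?R = "WC_reps G C k l"
  let ?S = "(\<lambda>(a, b). T_hat G (G, a, b)) ` ?R"
  let ?gens = "{T_hat G (K, a, b) | K a b. (K, a, b) \<in> C \<and> length a = k \<and> length b = l}"
  have Rsub: "set a \<subseteq> verts G" "set b \<subseteq> verts G" if "(a, b) \<in> ?R" for a b
    using that unfolding WC_reps_def by auto
  have same: "T_hat G (G, a', b') = T_hat G (G, a, b)"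
    if h: "(a, b) \<in> ?R" "(a', b') \<in> ?R" "T_hat G (G, a', b') (b, a) \<noteq> 0" for a b a' b'
  proof -
    obtain \<phi> where phi: "\<phi> \<in> homs G G" "map \<phi> a' = a" "map \<phi> b' = b"
      using T_nonzero_D[OF h(3)] by blast
    show ?thesis using orbit_T[OF G phi(1) Rsub[OF h(2)]] phi by simp
  qed
  have indep: "cindependent ?S"
    unfolding cindependent_def m.dependent_explicit
  proof (clarify)
    fix t u v0
    assume ft: "finite t" and tS: "t \<subseteq> ?S" and s0: "(\<Sum>v\<in>t. cscale (u v) v) = 0"
      and v0: "v0 \<in> t" and u0: "u v0 \<noteq> 0"
    obtain a b where ab: "(a, b) \<in> ?R" and v0e: "v0 = T_hat G (G, a, b)" using v0 tS by auto
    have "(\<Sum>v\<in>t. u v * v (b, a)) = 0"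
      using fun_cong[OF s0, of "(b, a)"] ft by (simp add: fun_sum_apply cscale_def)
    moreover have "(\<Sum>v\<in>t - {v0}. u v * v (b, a)) = 0"
    proof (rule sum.neutral, rule ballI)
      fix v assume "v \<in> t - {v0}"
      then have v: "v \<in> t" "v \<noteq> v0" by auto
      obtain a' b' where ab': "(a', b') \<in> ?R" and ve: "v = T_hat G (G, a', b')" using v tS by auto
      have "v (b, a) = 0" using same[OF ab ab'] v v0e ve by auto
      then show "u v * v (b, a) = 0" by simp
    qed
    moreover have "(\<Sum>v\<in>t. u v * v (b, a)) = u v0 * v0 (b, a) + (\<Sum>v\<in>t - {v0}. u v * v (b, a))"
      by (rule sum.remove[OF ft v0])
    moreover have "v0 (b, a) \<noteq> 0" using v0e T_self_nonzero[OF G Rsub[OF ab]] by simp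
    ultimately show False using u0 by simp
  qed
  have sub1: "?S \<subseteq> ?gens"
  proof
    fix v assume "v \<in> ?S"
    then obtain a b where "(a, b) \<in> ?R" "v = T_hat G (G, a, b)" by auto
    then show "v \<in> ?gens" unfolding WC_reps_def by blast
  qed
  have sub2: "?gens \<subseteq> m.span ?S"
  proof (rule subsetI)
    fix v assume "v \<in> ?gens"
    then obtain K a b where KC: "(K, a, b) \<in> C" and la: "length a = k" and lb: "length b = l"
      and ve: "v = T_hat G (K, a, b)" by blast
    have wf: "wf_bgraph (K, a, b)" using C KC unfolding skew_graph_category_def by (elim conjE) blast
    then have K: "finite (verts K)" "set a \<subseteq> verts K" "set b \<subseteq> verts K"
      unfolding wf_bgraph_def wf_graph_def by auto
    show "v \<in> m.span ?S"
      unfolding ve T_decomp[OF G K]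
    proof (intro m.span_sum m.span_scale m.span_base)
      fix \<phi> assume phi: "\<phi> \<in> homs K G"
      have "(map \<phi> a, map \<phi> b) \<in> ?R"
        unfolding WC_reps_def using la lb K homsD[OF phi] glue_in_C[OF C KC GC G phi] by auto
      then show "T_hat G (G, map \<phi> a, map \<phi> b) \<in> ?S" by (rule rev_image_eqI) simp
    qed
  qed
  have span: "cspan ?S = CG G C k l"
    unfolding cspan_def CG_def
  proof
    show "m.span ?S \<subseteq> m.span ?gens" by (rule m.span_mono[OF sub1])
    show "m.span ?gens \<subseteq> m.span ?S" by (rule m.span_minimal[OF sub2]) simp
  qed
  have orb: "\<forall>(a, b)\<in>?R. \<forall>(a', b')\<in>?R.
          T_hat G (G, a, b) = T_hat G (G, a', b')
          \<longrightarrow> (\<exists>\<sigma>\<in>Aut G. map \<sigma> a = a' \<and> map \<sigma> b = b')"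
  proof (clarify)
    fix a b a' b' assume ab: "(a, b) \<in> ?R" and ab': "(a', b') \<in> ?R"
      and e: "T_hat G (G, a, b) = T_hat G (G, a', b')"
    have "T_hat G (G, a, b) (b', a') \<noteq> 0" using e T_self_nonzero[OF G Rsub[OF ab']] by simp
    then obtain \<phi> where "\<phi> \<in> homs G G" "map \<phi> a = a'" "map \<phi> b = b'"
      using T_nonzero_D by blast
    then show "\<exists>\<sigma>\<in>Aut G. map \<sigma> a = a' \<and> map \<sigma> b = b'" using homs_Aut[OF G] by blast
  qed
  show ?thesis using indep span orb by blast
qed

end
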